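(* Let $c\neq o$ be vertices such that there is exactly one directed path $\pi$ from $c$ to $o$, and let $\delta=\delta_{co}$ be its length. Let $\bar L$ be the $(N-\delta-1)\times(N-\delta-1)$ principal submatrix of $L$ obtained by deleting the rows and columns indexed by the $\delta+1$ vertices of $\pi$. Then $$e_o^T\operatorname{adj}(sI+L)e_c=\vartheta(\pi)\,\det\big(sI_{N-\delta-1}+\bar L\big),$$ where the determinant of an empty matrix is $1$. Consequently, the roots $-\gamma_i$ of $h(s)=e_o^T\operatorname{adj}(sI+L)e_c$ are exactly the eigenvalues of $-\bar L$.
   Context: $\mathcal G$ is a weighted directed graph on $\{1,\dots,N\}$ with adjacency matrix $A=[a_{ij}]$. Here $a_{ij}>0$ if there is an arc from $j$ to $i$, of weight $a_{ij}$, and $a_{ij}=0$ otherwise (no self-loops). The Laplacian is $L=D-A$ with $D=\mathrm{diag}(\sum_j a_{ij})$. A directed path from $u$ to $w$ is a sequence of pairwise distinct vertices $u=v_0,\dots,v_\ell=w$ with an arc from $v_k$ to $v_{k+1}$ for each $k$. Its length is $\ell$ and its weight $\vartheta(\pi)$ is the product of its arc weights. $\delta_{uw}$ is the length of a shortest directed path from $u$ to $w$. $e_i$ is the $i$-th canonical basis vector, and $\operatorname{adj}$ denotes the adjugate matrix. *)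

theory Defs
  imports Complex_Main "Jordan_Normal_Form.Char_Poly" "Jordan_Normal_Form.DL_Submatrix"
begin

text \<open>Vertices are 0..<N (the paper's 1..N shifted by one).
  a i j > 0 means there is an arc from j to i of weight a i j.\<close>

definition weighted_digraph :: "nat \<Rightarrow> (nat \<Rightarrow> nat \<Rightarrow> real) \<Rightarrow> bool" where
  "weighted_digraph N a \<longleftrightarrow> (\<forall>i<N. \<forall>j<N. a i j \<ge> 0) \<and> (\<forall>i<N. a i i = 0)"

definition adjacency :: "nat \<Rightarrow> (nat \<Rightarrow> nat \<Rightarrow> real) \<Rightarrow> real mat" where
  "adjacency N a = mat N N (\<lambda>(i,j). a i j)"

definition laplacian :: "nat \<Rightarrow> (nat \<Rightarrow> nat \<Rightarrow> real) \<Rightarrow> real mat" where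
  "laplacian N a = mat N N (\<lambda>(i,j). if i = j then (\<Sum>k<N. a i k) else 0) - adjacency N a"

definition dpath :: "nat \<Rightarrow> (nat \<Rightarrow> nat \<Rightarrow> real) \<Rightarrow> nat \<Rightarrow> nat \<Rightarrow> nat list \<Rightarrow> bool" where
  "dpath N a u w vs \<longleftrightarrow> vs \<noteq> [] \<and> hd vs = u \<and> last vs = w \<and> distinct vs \<and> set vs \<subseteq> {..<N}
     \<and> (\<forall>k. Suc k < length vs \<longrightarrow> a (vs ! Suc k) (vs ! k) > 0)"

definition path_length :: "nat list \<Rightarrow> nat" where
  "path_length vs = length vs - 1"

definition path_weight :: "(nat \<Rightarrow> nat \<Rightarrow> real) \<Rightarrow> nat list \<Rightarrow> real" where
  "path_weight a vs = (\<Prod>k<length vs - 1. a (vs ! Suc k) (vs ! k))"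

definition shortest_dist :: "nat \<Rightarrow> (nat \<Rightarrow> nat \<Rightarrow> real) \<Rightarrow> nat \<Rightarrow> nat \<Rightarrow> nat" where
  "shortest_dist N a u w = (LEAST l. \<exists>vs. dpath N a u w vs \<and> path_length vs = l)"

abbreviation cmat :: "real mat \<Rightarrow> complex mat" where
  "cmat M \<equiv> map_mat complex_of_real M"

end

theory Submission
  imports Defs "HOL-Combinatorics.Cycles"
begin


lemma det_submatrix_principal:
  fixes A :: "'a::comm_ring_1 mat"
  assumes A: "A \<in> carrier_mat n n" and I: "I \<subseteq> {0..<n}"
  shows "det (submatrix A I I) = (\<Sum>q\<in>{q. q permutes I}. signof q * (\<Prod>k\<in>I. A $$ (k, q k)))"
proof -
  define m where "m = card I"
  have finI: "finite I" using I finite_subset by blast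
  have setI: "{i. i < dim_row A \<and> i \<in> I} = I" "{i. i < dim_col A \<and> i \<in> I} = I" using A I by auto
  have sub: "submatrix A I I \<in> carrier_mat m m" using dim_submatrix[of A I I] setI unfolding carrier_mat_def m_def by simp
  define f where "f = pick I"
  have mono: "\<And>i j. i < j \<Longrightarrow> j < m \<Longrightarrow> f i < f j" unfolding f_def m_def by (rule pick_mono) auto
  have inj: "inj_on f {0..<m}"
    by (intro inj_onI) (metis atLeastLessThan_iff mono nat_neq_iff)
  have img: "f ` {0..<m} \<subseteq> I" unfolding f_def m_def using pick_in_set by auto
  have bij: "bij_betw f {0..<m} I"
    unfolding bij_betw_def using inj img card_subset_eq[OF finI img] card_image[OF inj] m_def by auto
  define g where "g = inv_into {0..<m} f"
  have bijg: "bij_betw g I {0..<m}" unfolding g_def by (rule bij_betw_inv_into[OF bij])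
  have gf: "\<And>x. x \<in> {0..<m} \<Longrightarrow> g (f x) = x" unfolding g_def using inj by (simp add: inv_into_f_f)
  have fg: "\<And>x. x \<in> I \<Longrightarrow> f (g x) = x" unfolding g_def using bij by (simp add: bij_betw_def f_inv_into_f)
  have "det (submatrix A I I) = (\<Sum>p\<in>{p. p permutes {0..<m}}. signof p * (\<Prod>k=0..<m. A $$ (f k, f (p k))))"
    unfolding det_def'[OF sub]
  proof (intro sum.cong refl arg_cong2[where f="(*)"] prod.cong)
    fix p k assume p: "p \<in> {p. p permutes {0..<m}}" and k: "k \<in> {0..<m}"
    have "p k < m" using p k permutes_in_image by fastforce
    then show "submatrix A I I $$ (k, p k) = A $$ (f k, f (p k))"
      unfolding f_def using k by (subst submatrix_index) (auto simp: setI m_def)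
  qed
  also have "\<dots> = (\<Sum>q\<in>{q. q permutes I}. signof q * (\<Prod>k\<in>I. A $$ (k, q k)))"
  proof (rule sum.reindex_bij_witness[of _ "map_permutation I g" "map_permutation {0..<m} f"])
    fix p assume p: "p \<in> {p. p permutes {0..<m}}"
    show "map_permutation I g (map_permutation {0..<m} f p) = p"
      using map_permutation_compose_inv[OF bij _ gf] p by auto
    show "map_permutation {0..<m} f p \<in> {q. q permutes I}"
      using map_permutation_permutes[OF bij] p by auto
    have s: "signof (map_permutation {0..<m} f p) = (signof p :: 'a)"
      using sign_map_permutation[OF inj] p by auto
    have "(\<Prod>k\<in>I. A $$ (k, map_permutation {0..<m} f p k)) = (\<Prod>k\<in>{0..<m}. A $$ (f k, map_permutation {0..<m} f p (f k)))"
      by (rule prod.reindex_bij_betw[OF bij, symmetric])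
    also have "\<dots> = (\<Prod>k\<in>{0..<m}. A $$ (f k, f (p k)))"
      by (intro prod.cong refl) (simp add: map_permutation_apply[OF inj])
    finally show "signof (map_permutation {0..<m} f p) * (\<Prod>k\<in>I. A $$ (k, map_permutation {0..<m} f p k))
       = signof p * (\<Prod>k = 0..<m. A $$ (f k, f (p k)))" using s by simp
  next
    fix q assume q: "q \<in> {q. q permutes I}"
    show "map_permutation {0..<m} f (map_permutation I g q) = q"
      using map_permutation_compose_inv[OF bijg _ fg] q by auto
    show "map_permutation I g q \<in> {p. p permutes {0..<m}}"
      using map_permutation_permutes[OF bijg] q by auto
  qed
  finally show ?thesis .
qed



lemma cofactor_sum:
  fixes M :: "'a::comm_ring_1 mat"
  assumes M: "M \<in> carrier_mat n n" and i: "i < n" and j: "j < n"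
  shows "cofactor M i j = (\<Sum>p\<in>{p. p permutes {0..<n} \<and> p i = j}. signof p * (\<Prod>k\<in>{0..<n}-{i}. M $$ (k, p k)))"
proof -
  define B where "B = mat n n (\<lambda>(k,l). if k = i then (if l = j then 1 else 0) else M $$ (k,l))"
  have B: "B \<in> carrier_mat n n" unfolding B_def by simp
  have del: "mat_delete B i l = mat_delete M i l" for l
    unfolding mat_delete_def B_def using M by (intro eq_matI) auto
  have Bi: "l < n \<Longrightarrow> B $$ (i,l) = (if l = j then 1 else 0)" for l unfolding B_def using i by simp
  have "det B = (\<Sum>l<n. B $$ (i,l) * cofactor B i l)" by (rule laplace_expansion_row[OF B i])
  also have "\<dots> = (\<Sum>l<n. if l = j then cofactor M i l else 0)"
    by (intro sum.cong refl) (simp add: Bi cofactor_def del)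
  also have "\<dots> = cofactor M i j" using j by simp
  finally have 1: "det B = cofactor M i j" .
  have "det B = (\<Sum>p\<in>{p. p permutes {0..<n}}. signof p * (\<Prod>k=0..<n. B $$ (k, p k)))"
    by (rule det_def'[OF B])
  also have "\<dots> = (\<Sum>p\<in>{p. p permutes {0..<n}}. if p i = j then signof p * (\<Prod>k\<in>{0..<n}-{i}. M $$ (k, p k)) else 0)"
  proof (intro sum.cong refl)
    fix p assume p: "p \<in> {p. p permutes {0..<n}}"
    have pk: "k < n \<Longrightarrow> p k < n" for k using p permutes_in_image by fastforce
    have "(\<Prod>k=0..<n. B $$ (k, p k)) = B $$ (i, p i) * (\<Prod>k\<in>{0..<n}-{i}. B $$ (k, p k))"
      by (rule prod.remove) (use i in auto)
    also have "(\<Prod>k\<in>{0..<n}-{i}. B $$ (k, p k)) = (\<Prod>k\<in>{0..<n}-{i}. M $$ (k, p k))"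
      by (intro prod.cong refl) (auto simp: B_def pk)
    finally show "signof p * (\<Prod>k=0..<n. B $$ (k, p k)) = (if p i = j then signof p * (\<Prod>k\<in>{0..<n}-{i}. M $$ (k, p k)) else 0)"
      using i pk[OF i] by (auto simp: B_def)
  qed
  also have "\<dots> = (\<Sum>p\<in>{p \<in> {p. p permutes {0..<n}}. p i = j}. signof p * (\<Prod>k\<in>{0..<n}-{i}. M $$ (k, p k)))"
    by (rule sum.inter_filter[symmetric]) (simp add: finite_permutations)
  also have "{p \<in> {p. p permutes {0..<n}}. p i = j} = {p. p permutes {0..<n} \<and> p i = j}" by auto
  finally show ?thesis using 1 by simp
qed



lemma sign_cycle_of_list:
  assumes "distinct cs"
  shows "sign (cycle_of_list cs) = (-1) ^ (length cs - 1)"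
  using assms
proof (induction cs rule: cycle_of_list.induct)
  case (1 i j cs)
  have "sign (cycle_of_list (i # j # cs)) = sign (Transposition.transpose i j) * sign (cycle_of_list (j # cs))"
    by (simp add: sign_compose permutation_swap_id permutation_of_cycle)
  also have "\<dots> = - ((-1) ^ (length (j # cs) - 1))" using 1 by (simp add: sign_swap_id)
  also have "\<dots> = (-1) ^ (length (i # j # cs) - 1)" by simp
  finally show ?case .
qed (simp_all add: sign_id)



lemma rotate1_nth_Suc: "Suc k < length cs \<Longrightarrow> rotate1 cs ! k = cs ! Suc k"
proof (cases cs)
  case (Cons x xs)
  assume "Suc k < length cs"
  hence "k < length xs" using Cons by simp
  thus ?thesis using Cons by (simp add: nth_append)
qed simp

lemma rotate1_nth_last: "cs \<noteq> [] \<Longrightarrow> rotate1 cs ! (length cs - 1) = hd cs"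
proof (cases cs)
  case (Cons x xs)
  thus ?thesis by (simp add: nth_append)
qed simp

lemma cycle_of_list_nth:
  assumes "distinct cs" "Suc k < length cs"
  shows "cycle_of_list cs (cs ! k) = cs ! Suc k"
proof -
  have m: "map (cycle_of_list cs) cs = rotate1 cs"
    using cyclic_rotation[OF assms(1), of 1] by simp
  have "cycle_of_list cs (cs ! k) = map (cycle_of_list cs) cs ! k"
    using assms(2) by simp
  also have "\<dots> = rotate1 cs ! k" by (simp only: m)
  also have "\<dots> = cs ! Suc k" by (rule rotate1_nth_Suc[OF assms(2)])
  finally show ?thesis .
qed

lemma cycle_of_list_last:
  assumes "distinct cs" "cs \<noteq> []"
  shows "cycle_of_list cs (last cs) = hd cs"
proof -
  have m: "map (cycle_of_list cs) cs = rotate1 cs"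
    using cyclic_rotation[OF assms(1), of 1] by simp
  have "cycle_of_list cs (last cs) = map (cycle_of_list cs) cs ! (length cs - 1)"
    using assms(2) by (simp add: last_conv_nth)
  also have "\<dots> = rotate1 cs ! (length cs - 1)" by (simp only: m)
  also have "\<dots> = hd cs" by (rule rotate1_nth_last[OF assms(2)])
  finally show ?thesis .
qed



lemma path_perm:
  assumes ct: "c < N" "t < N" "c \<noteq> t"
    and unique: "\<forall>vs. dpath N a c t vs \<longrightarrow> vs = \<pi>"
    and p: "p permutes {0..<N}" "p c = t"
    and nz: "\<And>k. k < N \<Longrightarrow> k \<noteq> c \<Longrightarrow> p k \<noteq> k \<Longrightarrow> a k (p k) > 0"
    and i: "Suc i < length \<pi>"
  shows "p (\<pi> ! Suc i) = \<pi> ! i"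
proof -
  define w where "w j = (p ^^ j) t" for j
  have injp: "inj p" using p(1) permutes_inj by blast
  have permp: "permutation p" using p(1) permutes_imp_permutation by blast
  have wS: "w (Suc j) = p (w j)" for j unfolding w_def by simp
  have wV: "w j < N" for j
  proof (induction j)
    case 0 then show ?case using ct by (simp add: w_def)
  next
    case (Suc j) then show ?case using p(1) permutes_in_image[OF p(1), of "w j"] by (simp add: wS)
  qed
  obtain m where m: "(p ^^ m) t = t" "m > 0" using least_power_of_permutation[OF permp] by blast
  have "p (w (m - 1)) = p c" using m p(2) wS[of "m-1"] by (simp add: w_def)
  hence ex: "w (m - 1) = c" using injp by (simp add: inj_eq)
  define k where "k = (LEAST j. w j = c)"
  have wk: "w k = c" unfolding k_def using ex by (rule LeastI)
  have notc: "j < k \<Longrightarrow> w j \<noteq> c" for j unfolding k_def using not_less_Least by blast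
  have k0: "k > 0" using wk ct(3) by (cases k) (auto simp: w_def)
  have dist: "w i \<noteq> w j" if ij: "i < j" "j \<le> k" for i j
  proof
    assume eq: "w i = w j"
    have "(p ^^ (i + (j - i))) t = (p ^^ i) ((p ^^ (j - i)) t)" by (simp add: funpow_add)
    hence "w j = (p ^^ i) (w (j - i))" using ij unfolding w_def by simp
    hence "(p ^^ i) t = (p ^^ i) (w (j - i))" using eq by (simp add: w_def)
    hence t: "t = w (j - i)" using inj_fn[OF injp, of i] by (simp add: inj_eq)
    have "p (w (j - i - 1)) = w (j - i)" using ij wS[of "j - i - 1"] by (simp add: Suc_diff_Suc)
    hence "p (w (j - i - 1)) = p c" using t p(2) by simp
    hence "w (j - i - 1) = c" using injp by (simp add: inj_eq)
    moreover have "j - i - 1 < k" using ij by simp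
    ultimately show False using notc by blast
  qed
  define vs where "vs = map (\<lambda>j. w (k - j)) [0..<Suc k]"
  have lvs: "length vs = Suc k" unfolding vs_def by simp
  have vsn: "j < Suc k \<Longrightarrow> vs ! j = w (k - j)" for j unfolding vs_def by (simp del: upt_Suc)
  have "dpath N a c t vs"
    unfolding dpath_def
  proof (intro conjI allI impI)
    show "vs \<noteq> []" using lvs by auto
    show "hd vs = c" proof -
      have "vs \<noteq> []" using lvs by auto
      thus ?thesis using vsn[of 0] wk hd_conv_nth[of vs] by simp
    qed
    show "last vs = t" proof -
      have "vs \<noteq> []" using lvs by auto
      thus ?thesis using vsn[of k] lvs last_conv_nth[of vs] by (simp add: w_def)
    qed
    show "distinct vs"
      unfolding distinct_conv_nth lvs
    proof (intro allI impI)
      fix x y assume "x < Suc k" "y < Suc k" "x \<noteq> y"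
      hence xy: "x < Suc k" "y < Suc k" "x \<noteq> y" by auto
      have "w (k - x) \<noteq> w (k - y)"
      proof (cases "x < y")
        case True
        then have "k - y < k - x" "k - x \<le> k" using xy by auto
        then show ?thesis using dist[of "k - y" "k - x"] by auto
      next
        case False
        then have "k - x < k - y" "k - y \<le> k" using xy by auto
        then show ?thesis using dist[of "k - x" "k - y"] by auto
      qed
      thus "vs ! x \<noteq> vs ! y" using vsn xy by simp
    qed
    show "set vs \<subseteq> {..<N}" unfolding vs_def using wV by auto
    fix j assume j: "Suc j < length vs"
    hence j': "Suc j < Suc k" using lvs by simp
    define x where "x = w (k - Suc j)"
    have e1: "vs ! Suc j = x" using vsn[OF j'] x_def by simp
    have e2: "vs ! j = p x" using vsn[of j] j' x_def wS[of "k - Suc j"] by (simp add: Suc_diff_Suc)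
    have "x \<noteq> c" using notc[of "k - Suc j"] j' x_def by simp
    moreover have "p x \<noteq> x"
    proof -
      have lt: "k - Suc j < k - j" "k - j \<le> k" using j' by arith+
      have "Suc (k - Suc j) = k - j" using j' by arith
      hence "w (k - j) = p x" using wS[of "k - Suc j"] x_def by simp
      thus ?thesis using dist[OF lt] x_def by simp
    qed
    ultimately have "a x (p x) > 0" using nz wV x_def by blast
    thus "a (vs ! Suc j) (vs ! j) > 0" using e1 e2 by simp
  qed
  hence vspi: "vs = \<pi>" using unique by blast
  have "p (\<pi> ! Suc i) = p (w (k - Suc i))" using vsn[of "Suc i"] i lvs vspi by simp
  also have "\<dots> = w (k - i)" using i lvs vspi by (simp add: wS[symmetric] Suc_diff_Suc)
  also have "\<dots> = \<pi> ! i" using vsn[of i] i lvs vspi by simp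
  finally show ?thesis .
qed



theorem theorem3:
  fixes N :: nat and a :: "nat \<Rightarrow> nat \<Rightarrow> real" and c t :: nat and \<pi> :: "nat list"
  assumes G: "weighted_digraph N a"
    and ct: "c < N" "t < N" "c \<noteq> t"
    and path: "dpath N a c t \<pi>"
    and unique: "\<forall>vs. dpath N a c t vs \<longrightarrow> vs = \<pi>"
  defines "\<delta> \<equiv> shortest_dist N a c t"
    and "Lbar \<equiv> submatrix (laplacian N a) ({..<N} - set \<pi>) ({..<N} - set \<pi>)"
    and "h \<equiv> (\<lambda>s::complex. adj_mat (s \<cdot>\<^sub>m 1\<^sub>m N + cmat (laplacian N a)) $$ (t, c))"
  shows "Lbar \<in> carrier_mat (N - \<delta> - 1) (N - \<delta> - 1)
    \<and> (\<forall>s::complex. h s = complex_of_real (path_weight a \<pi>)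
                      * det (s \<cdot>\<^sub>m 1\<^sub>m (N - \<delta> - 1) + cmat Lbar))
    \<and> {s. h s = 0} = {s. eigenvalue (- cmat Lbar) s}"
proof -
  define l where "l = length \<pi>"
  define S where "S = set \<pi>"
  define S' where "S' = {..<N} - S"
  define L where "L = laplacian N a"
  define \<theta> where "\<theta> = path_weight a \<pi>"
  have pne: "\<pi> \<noteq> []" and phd: "hd \<pi> = c" and plast: "last \<pi> = t" and pdist: "distinct \<pi>"
    and pset: "set \<pi> \<subseteq> {..<N}" and parc: "\<And>k. Suc k < length \<pi> \<Longrightarrow> a (\<pi> ! Suc k) (\<pi> ! k) > 0"
    using path unfolding dpath_def by auto
  have l2: "l \<ge> 2"
  proof (rule ccontr)
    assume "\<not> 2 \<le> l"
    moreover have "l \<noteq> 0" using pne l_def by simp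
    ultimately have "l = 1" by linarith
    then have "hd \<pi> = last \<pi>" using l_def by (cases \<pi>) auto
    thus False using phd plast ct by simp
  qed
  have delta: "\<delta> = l - 1"
    unfolding \<delta>_def shortest_dist_def
  proof (rule Least_equality)
    show "\<exists>vs. dpath N a c t vs \<and> path_length vs = l - 1"
      using path by (auto simp: path_length_def l_def)
    show "\<And>y. \<exists>vs. dpath N a c t vs \<and> path_length vs = y \<Longrightarrow> l - 1 \<le> y"
      using unique by (auto simp: path_length_def l_def)
  qed
  have m: "N - \<delta> - 1 = N - l" using delta l2 by simp
  have cardS: "card S = l" unfolding S_def l_def using pdist by (simp add: distinct_card)
  have cardS': "card S' = N - l" unfolding S'_def using cardS pset S_def by (simp add: card_Diff_subset)
  have S'sub: "S' \<subseteq> {0..<N}" unfolding S'_def by auto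
  have Lc: "L \<in> carrier_mat N N" unfolding L_def laplacian_def adjacency_def by (intro minus_carrier_mat mat_carrier)
  have Lbar_def': "Lbar = submatrix L S' S'" unfolding Lbar_def L_def S'_def S_def ..
  have setS': "{i. i < N \<and> i \<in> S'} = S'" unfolding S'_def by auto
  have Lbarc: "Lbar \<in> carrier_mat (N - l) (N - l)"
    unfolding Lbar_def' carrier_mat_def using dim_submatrix[of L S' S'] Lc setS' cardS' by simp

  define cyc where "cyc = cycle_of_list (rev \<pi>)"
  have cycS: "cyc permutes S" unfolding cyc_def S_def using cycle_permutes[of "rev \<pi>"] by simp
  have cyc_c: "cyc c = t"
    using cycle_of_list_last[of "rev \<pi>"] pdist pne phd plast
    by (simp add: cyc_def last_rev hd_rev)
  have cyc_nth: "cyc (\<pi> ! Suc i) = \<pi> ! i" if i: "Suc i < l" for i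
  proof -
    have 1: "rev \<pi> ! (l - 2 - i) = \<pi> ! Suc i" using i l2 by (simp add: rev_nth l_def Suc_diff_Suc)
    have 2: "rev \<pi> ! Suc (l - 2 - i) = \<pi> ! i" using i l2 by (simp add: rev_nth l_def Suc_diff_Suc)
    have "cyc (rev \<pi> ! (l - 2 - i)) = rev \<pi> ! Suc (l - 2 - i)"
      unfolding cyc_def by (rule cycle_of_list_nth) (use pdist i l2 in \<open>auto simp: l_def\<close>)
    thus ?thesis using 1 2 by simp
  qed
  have Sdesc: "x = c \<or> (\<exists>i. Suc i < l \<and> x = \<pi> ! Suc i)" if x: "x \<in> S" for x
  proof -
    obtain j where j: "j < l" "x = \<pi> ! j" using x unfolding S_def l_def by (auto simp: in_set_conv_nth)
    show ?thesis
    proof (cases j)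
      case 0 then show ?thesis using j phd pne by (simp add: hd_conv_nth)
    next
      case (Suc i) then show ?thesis using j by auto
    qed
  qed
  have finS: "finite S" unfolding S_def by simp
  have finS': "finite S'" unfolding S'_def by simp
  have SV: "S \<subseteq> {0..<N}" using pset S_def by auto
  have \<theta>pos: "\<theta> > 0" unfolding \<theta>_def path_weight_def by (rule prod_pos) (use parc in auto)
  have Lij: "i < N \<Longrightarrow> j < N \<Longrightarrow> L $$ (i,j) = (if i = j then (\<Sum>k<N. a i k) else 0) - a i j" for i j
    unfolding L_def laplacian_def adjacency_def by simp
  have aii: "i < N \<Longrightarrow> a i i = 0" for i using G unfolding weighted_digraph_def by auto
  have age: "i < N \<Longrightarrow> j < N \<Longrightarrow> a i j \<ge> 0" for i j using G unfolding weighted_digraph_def by auto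
  define M where "M s = s \<cdot>\<^sub>m 1\<^sub>m N + cmat L" for s :: complex
  have Mc: "M s \<in> carrier_mat N N" for s unfolding M_def using Lc by auto
  have Mij: "i < N \<Longrightarrow> j < N \<Longrightarrow> M s $$ (i,j) = (if i = j then s else 0) + complex_of_real (L $$ (i,j))" for s i j
    unfolding M_def using Lc by simp
  have Moff: "i < N \<Longrightarrow> j < N \<Longrightarrow> i \<noteq> j \<Longrightarrow> M s $$ (i,j) = - complex_of_real (a i j)" for s i j
    using Mij Lij by simp
  have main: "h s = complex_of_real \<theta> * det (s \<cdot>\<^sub>m 1\<^sub>m (N - l) + cmat Lbar)" for s
  proof -
    define F where "F p = (signof p :: complex) * (\<Prod>k\<in>{0..<N}-{c}. M s $$ (k, p k))" for p
    define Q where "Q = {p. p permutes {0..<N} \<and> p c = t \<and> (\<forall>x\<in>S. p x = cyc x)}"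
    define R where "R = {q. q permutes S'}"
    have "h s = cofactor (M s) c t"
      unfolding h_def M_def[symmetric] L_def[symmetric] adj_mat_def using Mc[of s] ct by simp
    also have "\<dots> = (\<Sum>p\<in>{p. p permutes {0..<N} \<and> p c = t}. F p)"
      unfolding F_def by (rule cofactor_sum[OF Mc ct(1) ct(2)])
    also have "\<dots> = (\<Sum>p\<in>Q. F p)"
    proof (rule sum.mono_neutral_right)
      show "finite {p. p permutes {0..<N} \<and> p c = t}"
        using finite_permutations[of "{0..<N}"] by (rule rev_finite_subset) auto
      show "Q \<subseteq> {p. p permutes {0..<N} \<and> p c = t}" unfolding Q_def by auto
      show "\<forall>p\<in>{p. p permutes {0..<N} \<and> p c = t} - Q. F p = 0"
      proof
        fix p assume pP: "p \<in> {p. p permutes {0..<N} \<and> p c = t} - Q"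
        hence p: "p permutes {0..<N}" "p c = t" by auto
        have pk: "k < N \<Longrightarrow> p k < N" for k using permutes_in_image[OF p(1), of k] by simp
        show "F p = 0"
        proof (rule ccontr)
          assume "F p \<noteq> 0"
          hence "(\<Prod>k\<in>{0..<N}-{c}. M s $$ (k, p k)) \<noteq> 0" unfolding F_def by auto
          hence nz0: "k < N \<Longrightarrow> k \<noteq> c \<Longrightarrow> M s $$ (k, p k) \<noteq> 0" for k by (simp add: prod_zero_iff)
          have nz: "a k (p k) > 0" if "k < N" "k \<noteq> c" "p k \<noteq> k" for k
          proof -
            have "a k (p k) \<noteq> 0" using nz0[OF that(1,2)] Moff[of k "p k" s] that pk by auto
            thus ?thesis using age[of k "p k"] that pk by auto
          qed
          have pn: "Suc i < l \<Longrightarrow> p (\<pi> ! Suc i) = \<pi> ! i" for i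
            using path_perm[OF ct unique p nz] l_def by blast
          have "\<forall>x\<in>S. p x = cyc x"
          proof
            fix x assume "x \<in> S"
            from Sdesc[OF this] show "p x = cyc x"
              using p(2) cyc_c pn cyc_nth by auto
          qed
          thus False using pP p unfolding Q_def by auto
        qed
      qed
    qed
    also have "\<dots> = (\<Sum>q\<in>R. complex_of_real \<theta> * (signof q * (\<Prod>k\<in>S'. M s $$ (k, q k))))"
    proof (rule sum.reindex_bij_witness[symmetric, of _ "\<lambda>p x. if x \<in> S then x else p x" "\<lambda>q. q \<circ> cyc"])
      fix q assume q: "q \<in> R"
      hence qS': "q permutes S'" unfolding R_def by simp
      have qfix: "x \<in> S \<Longrightarrow> q x = x" for x using permutes_not_in[OF qS'] S'_def by auto
      have cfix: "x \<notin> S \<Longrightarrow> cyc x = x" for x using permutes_not_in[OF cycS] by auto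
      have cin: "x \<in> S \<Longrightarrow> cyc x \<in> S" for x using permutes_in_image[OF cycS] by auto
      show "(\<lambda>x. if x \<in> S then x else (q \<circ> cyc) x) = q"
        using qfix cfix by (auto simp: fun_eq_iff)
      have tS: "t \<in> S" using pne plast S_def by auto
      have "q \<circ> cyc permutes {0..<N}"
        by (rule permutes_compose[OF permutes_subset[OF cycS SV] permutes_subset[OF qS' S'sub]])
      moreover have "(q \<circ> cyc) c = t" using cyc_c qfix[OF tS] by simp
      moreover have "\<forall>x\<in>S. (q \<circ> cyc) x = cyc x" using qfix cin by auto
      ultimately show "q \<circ> cyc \<in> Q" unfolding Q_def by auto
      have sg: "(signof (q \<circ> cyc) :: complex) = signof q * signof cyc"
        using sign_compose[OF permutes_imp_permutation[OF finS' qS'] permutes_imp_permutation[OF finS cycS]]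
        by simp
      have sgc: "(signof cyc :: complex) = (-1) ^ (l - 1)"
        using sign_cycle_of_list[of "rev \<pi>"] pdist unfolding cyc_def l_def by simp
      have split: "{0..<N}-{c} = (S - {c}) \<union> S'" using SV S'_def pne phd S_def hd_in_set by fastforce
      have "(\<Prod>k\<in>{0..<N}-{c}. M s $$ (k, (q \<circ> cyc) k))
          = (\<Prod>k\<in>S-{c}. M s $$ (k, (q \<circ> cyc) k)) * (\<Prod>k\<in>S'. M s $$ (k, (q \<circ> cyc) k))"
        unfolding split by (rule prod.union_disjoint) (use finS finS' S'_def in auto)
      also have "(\<Prod>k\<in>S'. M s $$ (k, (q \<circ> cyc) k)) = (\<Prod>k\<in>S'. M s $$ (k, q k))"
        by (intro prod.cong refl) (auto simp: cfix S'_def)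
      also have "(\<Prod>k\<in>S-{c}. M s $$ (k, (q \<circ> cyc) k)) = (\<Prod>k\<in>S-{c}. M s $$ (k, cyc k))"
        by (intro prod.cong refl) (auto simp: cin qfix)
      also have "S - {c} = (\<lambda>i. \<pi> ! Suc i) ` {..<l-1}"
      proof
        show "S - {c} \<subseteq> (\<lambda>i. \<pi> ! Suc i) ` {..<l-1}"
        proof
          fix x assume x: "x \<in> S - {c}"
          then obtain i where i: "Suc i < l" "x = \<pi> ! Suc i" using Sdesc[of x] by blast
          hence "i \<in> {..<l-1}" by simp
          thus "x \<in> (\<lambda>i. \<pi> ! Suc i) ` {..<l-1}" using i(2) by (rule rev_image_eqI)
        qed
        show "(\<lambda>i. \<pi> ! Suc i) ` {..<l-1} \<subseteq> S - {c}"
        proof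
          fix x assume "x \<in> (\<lambda>i. \<pi> ! Suc i) ` {..<l-1}"
          then obtain i where i: "i < l - 1" "x = \<pi> ! Suc i" by auto
          have "x \<in> S" using i unfolding S_def l_def by auto
          moreover have "x \<noteq> c"
          proof
            assume "x = c"
            hence "\<pi> ! Suc i = \<pi> ! 0" using i phd pne by (simp add: hd_conv_nth)
            moreover have "Suc i < length \<pi>" "0 < length \<pi>" using i l_def by auto
            ultimately show False using nth_eq_iff_index_eq[OF pdist] by blast
          qed
          ultimately show "x \<in> S - {c}" by simp
        qed
      qed
      also have "(\<Prod>k\<in>(\<lambda>i. \<pi> ! Suc i) ` {..<l-1}. M s $$ (k, cyc k)) = (\<Prod>i<l-1. M s $$ (\<pi> ! Suc i, cyc (\<pi> ! Suc i)))"
        using pdist by (subst prod.reindex) (auto simp: inj_on_def nth_eq_iff_index_eq l_def)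
      also have "\<dots> = (\<Prod>i<l-1. (-1) * complex_of_real (a (\<pi> ! Suc i) (\<pi> ! i)))"
      proof (intro prod.cong refl)
        fix i assume "i \<in> {..<l-1}"
        hence i: "Suc i < l" by auto
        have lt: "\<pi> ! Suc i < N" "\<pi> ! i < N" using i pset unfolding l_def by (meson Suc_lessD lessThan_iff nth_mem subsetD)+
        have ne: "\<pi> ! Suc i \<noteq> \<pi> ! i" using i pdist l_def by (simp add: nth_eq_iff_index_eq)
        show "M s $$ (\<pi> ! Suc i, cyc (\<pi> ! Suc i)) = (-1) * complex_of_real (a (\<pi> ! Suc i) (\<pi> ! i))"
          using cyc_nth[OF i] Moff[OF lt ne] by simp
      qed
      also have "\<dots> = (-1) ^ (l - 1) * complex_of_real \<theta>"
        unfolding prod.distrib by (simp add: \<theta>_def path_weight_def l_def)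
      finally have pr: "(\<Prod>k\<in>{0..<N}-{c}. M s $$ (k, (q \<circ> cyc) k)) = (-1) ^ (l - 1) * complex_of_real \<theta> * (\<Prod>k\<in>S'. M s $$ (k, q k))" .
      have mm: "((-1::complex) ^ (l - 1)) * (-1) ^ (l - 1) = 1" by (simp flip: power_add)
      show "F (q \<circ> cyc) = complex_of_real \<theta> * (signof q * (\<Prod>k\<in>S'. M s $$ (k, q k)))"
        unfolding F_def pr sg sgc
        using mm by (simp add: algebra_simps)
    next
      fix p assume p: "p \<in> Q"
      hence pV: "p permutes {0..<N}" and pc: "\<forall>x\<in>S. p x = cyc x" unfolding Q_def by auto
      have cfix: "x \<notin> S \<Longrightarrow> cyc x = x" for x using permutes_not_in[OF cycS] by auto
      have cin: "x \<in> S \<Longrightarrow> cyc x \<in> S" for x using permutes_in_image[OF cycS] by auto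
      show "(\<lambda>x. if x \<in> S then x else p x) \<circ> cyc = p"
      proof (rule ext)
        fix y
        show "((\<lambda>x. if x \<in> S then x else p x) \<circ> cyc) y = p y"
          using pc cfix[of y] cin[of y] by (cases "y \<in> S") auto
      qed
      have eq: "(\<lambda>x. if x \<in> S then x else p x) = p \<circ> inv_into UNIV cyc"
      proof
        fix x show "(if x \<in> S then x else p x) = (p \<circ> inv_into UNIV cyc) x"
        proof (cases "x \<in> S")
          case True
          have "inv_into UNIV cyc x \<in> S" using permutes_in_image[OF permutes_inv[OF cycS]] True by simp
          hence "p (inv_into UNIV cyc x) = cyc (inv_into UNIV cyc x)" using pc by simp
          also have "\<dots> = x" using permutes_inverses(1)[OF cycS] by simp
          finally show ?thesis using True by simp
        next
          case False
          have "inv_into UNIV cyc x = x" using permutes_not_in[OF permutes_inv[OF cycS] False] .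
          thus ?thesis using False by simp
        qed
      qed
      have "p \<circ> inv_into UNIV cyc permutes {0..<N}"
        by (rule permutes_compose[OF permutes_subset[OF permutes_inv[OF cycS] SV] pV])
      hence "(\<lambda>x. if x \<in> S then x else p x) permutes {0..<N}" using eq by simp
      hence "(\<lambda>x. if x \<in> S then x else p x) permutes S'"
        by (rule permutes_superset) (auto simp: S'_def)
      thus "(\<lambda>x. if x \<in> S then x else p x) \<in> R" unfolding R_def by simp
    qed
    also have "\<dots> = complex_of_real \<theta> * (\<Sum>q\<in>R. signof q * (\<Prod>k\<in>S'. M s $$ (k, q k)))"
      by (simp add: sum_distrib_left)
    also have "(\<Sum>q\<in>R. signof q * (\<Prod>k\<in>S'. M s $$ (k, q k))) = det (submatrix (M s) S' S')"
      unfolding R_def by (rule det_submatrix_principal[OF Mc S'sub, symmetric])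
    also have "submatrix (M s) S' S' = s \<cdot>\<^sub>m 1\<^sub>m (N - l) + cmat Lbar"
    proof (rule eq_matI)
      have d: "dim_row (submatrix (M s) S' S') = N - l" "dim_col (submatrix (M s) S' S') = N - l"
        using dim_submatrix[of "M s" S' S'] Mc[of s] setS' cardS' by auto
      show "dim_row (submatrix (M s) S' S') = dim_row (s \<cdot>\<^sub>m 1\<^sub>m (N - l) + cmat Lbar)"
        "dim_col (submatrix (M s) S' S') = dim_col (s \<cdot>\<^sub>m 1\<^sub>m (N - l) + cmat Lbar)"
        using d Lbarc by auto
      fix i j assume ij: "i < dim_row (s \<cdot>\<^sub>m 1\<^sub>m (N - l) + cmat Lbar)" "j < dim_col (s \<cdot>\<^sub>m 1\<^sub>m (N - l) + cmat Lbar)"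
      hence ij': "i < N - l" "j < N - l" using Lbarc by auto
      have pin: "pick S' i < N" "pick S' j < N"
        using pick_in_set[of i S'] pick_in_set[of j S'] ij' cardS' S'sub by auto
      have peq: "pick S' i = pick S' j \<longleftrightarrow> i = j"
        using pick_mono[of i S' j] pick_mono[of j S' i] ij' cardS'
        by (metis less_irrefl_nat nat_neq_iff)
      have "submatrix (M s) S' S' $$ (i, j) = M s $$ (pick S' i, pick S' j)"
        by (rule submatrix_index) (use ij' Mc[of s] setS' cardS' in auto)
      also have "\<dots> = (if i = j then s else 0) + complex_of_real (L $$ (pick S' i, pick S' j))"
        using Mij[OF pin] peq by simp
      also have "L $$ (pick S' i, pick S' j) = Lbar $$ (i,j)"
        unfolding Lbar_def' by (rule submatrix_index[symmetric]) (use ij' Lc setS' cardS' in auto)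
      finally show "submatrix (M s) S' S' $$ (i, j) = (s \<cdot>\<^sub>m 1\<^sub>m (N - l) + cmat Lbar) $$ (i, j)"
        using ij' Lbarc by simp
    qed
    finally show ?thesis .
  qed
  have part3: "{s. h s = 0} = {s. eigenvalue (- cmat Lbar) s}"
  proof (intro Collect_cong)
    fix s
    have X: "s \<cdot>\<^sub>m 1\<^sub>m (N - l) + cmat Lbar \<in> carrier_mat (N - l) (N - l)" using Lbarc by auto
    have mL: "- cmat Lbar \<in> carrier_mat (N - l) (N - l)" using Lbarc by auto
    have "char_matrix (- cmat Lbar) s = - (s \<cdot>\<^sub>m 1\<^sub>m (N - l) + cmat Lbar)"
      unfolding char_matrix_def by (rule eq_matI) (use Lbarc in auto)
    hence "eigenvalue (- cmat Lbar) s \<longleftrightarrow> det (s \<cdot>\<^sub>m 1\<^sub>m (N - l) + cmat Lbar) = 0"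
      unfolding eigenvalue_det[OF mL] using det_0_negate[OF X] by simp
    moreover have "h s = 0 \<longleftrightarrow> det (s \<cdot>\<^sub>m 1\<^sub>m (N - l) + cmat Lbar) = 0"
      using main[of s] \<theta>pos by simp
    ultimately show "h s = 0 \<longleftrightarrow> eigenvalue (- cmat Lbar) s" by simp
  qed
  show ?thesis using Lbarc main part3 m \<theta>_def by simp
qed

end
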